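(* Let $\mathfrak g$ be a finite-dimensional complex Lie algebra, $U\subset\mathfrak g^*\times\mathfrak g^*$ open, and $\lambda_1,\lambda_2:U\to\mathbb C$ locally analytic functions such that for every $(x,a)\in U$, $\lambda_1(x,a)$ and $\lambda_2(x,a)$ are distinct eigenvalues of the pencil $\mathcal A_x+\mu\mathcal A_a$. Then for $(x_0,a_0)$ in an open dense subset of $U$, $\frac{\partial\lambda_1}{\partial x}(x_0,a_0)\wedge\frac{\partial\lambda_2}{\partial x}(x_0,a_0)\neq0$.
   Context: For $x\in\mathfrak g^*$, $\mathcal A_x$ is the skew form $(\xi,\eta)\mapsto\langle x,[\xi,\eta]\rangle$ on $\mathfrak g$. A number $\lambda_0$ is an eigenvalue of the pencil $\mathcal A_x+\mu\mathcal A_a$ if $\operatorname{rk}(\mathcal A_x-\lambda_0\mathcal A_a)<\max_\mu\operatorname{rk}(\mathcal A_x+\mu\mathcal A_a)$. $\frac{\partial\lambda}{\partial x}$ denotes the differential with respect to $x\in\mathfrak g^*$ (an element of $\mathfrak g$). *)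

theory Defs
  imports "HOL-Analysis.Analysis"
begin

text \<open>The Lie algebra g is modelled as complex^'n (a basis is fixed, the index type 'n is
finite), its dual g* is identified with complex^'n via the dual basis, so the pairing is
the coordinate pairing below.\<close>

definition pairing :: "complex^'n \<Rightarrow> complex^'n \<Rightarrow> complex" where
  "pairing x \<xi> = (\<Sum>i\<in>UNIV. x$i * \<xi>$i)"

definition lie_algebra :: "(complex^'n \<Rightarrow> complex^'n \<Rightarrow> complex^'n) \<Rightarrow> bool" where
  "lie_algebra br \<longleftrightarrow>
     (\<forall>x y z. br (x + y) z = br x z + br y z) \<and>
     (\<forall>x y z. br x (y + z) = br x y + br x z) \<and>
     (\<forall>c x y. br (c *s x) y = c *s br x y) \<and>
     (\<forall>c x y. br x (c *s y) = c *s br x y) \<and>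
     (\<forall>x. br x x = 0) \<and>
     (\<forall>x y z. br x (br y z) + br y (br z x) + br z (br x y) = 0)"

text \<open>Gram matrix of the skew form A_x(xi,eta) = <x,[xi,eta]> in the fixed basis.\<close>
definition form_matrix :: "(complex^'n \<Rightarrow> complex^'n \<Rightarrow> complex^'n) \<Rightarrow> complex^'n \<Rightarrow> complex^'n^'n" where
  "form_matrix br x = (\<chi> j k. pairing x (br (axis j 1) (axis k 1)))"

definition pencil :: "(complex^'n \<Rightarrow> complex^'n \<Rightarrow> complex^'n) \<Rightarrow> complex^'n \<Rightarrow> complex^'n \<Rightarrow> complex \<Rightarrow> complex^'n^'n" where
  "pencil br x a \<mu> = (\<chi> j k. form_matrix br x $ j $ k + \<mu> * form_matrix br a $ j $ k)"

definition pencil_eigenvalue :: "(complex^'n \<Rightarrow> complex^'n \<Rightarrow> complex^'n) \<Rightarrow> complex^'n \<Rightarrow> complex^'n \<Rightarrow> complex \<Rightarrow> bool" where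
  "pencil_eigenvalue br x a l0 \<longleftrightarrow>
     rank (pencil br x a (- l0)) < Max (range (\<lambda>\<mu>. rank (pencil br x a \<mu>)))"

text \<open>Local analyticity of a function of (x,a) in g* x g*: near each point of U it is the sum
of a (unconditionally, hence absolutely) convergent power series in all 2n coordinates.\<close>
definition locally_analytic_on :: "((complex^'n) \<times> (complex^'n) \<Rightarrow> complex) \<Rightarrow> ((complex^'n) \<times> (complex^'n)) set \<Rightarrow> bool" where
  "locally_analytic_on f U \<longleftrightarrow>
     (\<forall>p\<in>U. \<exists>r>0. \<exists>c :: ('n \<Rightarrow> nat) \<times> ('n \<Rightarrow> nat) \<Rightarrow> complex.
        \<forall>q\<in>ball p r.
          ((\<lambda>(\<alpha>, \<beta>). c (\<alpha>, \<beta>) * (\<Prod>i\<in>UNIV. (fst q $ i - fst p $ i) ^ \<alpha> i)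
                                  * (\<Prod>i\<in>UNIV. (snd q $ i - snd p $ i) ^ \<beta> i)) has_sum f q) UNIV)"

text \<open>Differential with respect to x (an element of g, in coordinates: the partial derivatives).\<close>
definition dx :: "((complex^'n) \<times> (complex^'n) \<Rightarrow> complex) \<Rightarrow> complex^'n \<Rightarrow> complex^'n \<Rightarrow> complex^'n" where
  "dx f x a = (\<chi> i. deriv (\<lambda>t. f (x + t *s axis i 1, a)) 0)"

text \<open>Coordinates of u \<and> v in the basis e_i \<and> e_j (i,j arbitrary; vanishing iff all i<j vanish).\<close>
definition wedge2 :: "complex^'n \<Rightarrow> complex^'n \<Rightarrow> complex^('n \<times> 'n)" where
  "wedge2 u v = (\<chi> p. u$(fst p) * v$(snd p) - u$(snd p) * v$(fst p))"

end

theory Submission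
  imports Defs "HOL-Computational_Algebra.Polynomial"
begin


lemma det_affine_poly:
  fixes C D :: "complex^'n^'n"
  shows "\<exists>p. \<forall>\<mu>. poly p \<mu> = det (\<chi> i j. C$i$j + \<mu> * D$i$j)"
proof
  let ?p = "\<Sum>\<pi>\<in>{\<pi>. \<pi> permutes (UNIV::'n set)}. smult (of_int (sign \<pi>)) (\<Prod>i\<in>UNIV. [:C$i$(\<pi> i), D$i$(\<pi> i):])"
  show "\<forall>\<mu>. poly ?p \<mu> = det (\<chi> i j. C$i$j + \<mu> * D$i$j)"
    by (simp add: det_def poly_sum poly_prod)
qed

lemma rank_le_card: "rank (A::complex^'n^'n) \<le> CARD('n)"
  unfolding row_rank_def_gen
  using dim_subset_UNIV_cart_gen[of "rows A"] by simp

lemma rank_ge_indep: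
  fixes A :: "complex^'n^'n"
  assumes "vec.independent S" "S \<subseteq> rows A" "finite S"
  shows "card S \<le> rank A"
  unfolding row_rank_def_gen using assms vec.independent_card_le_dim by blast

lemma rank_scale:
  fixes M :: "complex^'n^'n"
  assumes "s \<noteq> 0"
  shows "rank (\<chi> j k. s * M$j$k) = rank M"
proof -
  have r: "row i (\<chi> j k. s * M$j$k) = s *s row i M" for i
    by (simp add: row_def vec_eq_iff)
  have "vec.span (rows (\<chi> j k. s * M$j$k)) = vec.span (rows M)"
  proof (rule vec.span_eq[THEN iffD2], rule conjI)
    show "rows (\<chi> j k. s * M$j$k) \<subseteq> vec.span (rows M)"
    proof
      fix v assume "v \<in> rows (\<chi> j k. s * M$j$k)"
      then obtain i where v: "v = s *s row i M" by (auto simp: rows_def r)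
      have "row i M \<in> rows M" by (auto simp: rows_def)
      then show "v \<in> vec.span (rows M)" unfolding v by (intro vec.span_scale vec.span_base)
    qed
    show "rows M \<subseteq> vec.span (rows (\<chi> j k. s * M$j$k))"
    proof
      fix v assume "v \<in> rows M"
      then obtain i where v: "v = row i M" by (auto simp: rows_def)
      have "v = inverse s *s row i (\<chi> j k. s * M$j$k)" using assms by (simp add: r v)
      moreover have "row i (\<chi> j k. s * M$j$k) \<in> rows (\<chi> j k. s * M$j$k)" by (auto simp: rows_def)
      ultimately show "v \<in> vec.span (rows (\<chi> j k. s * M$j$k))"
        by (simp add: vec.span_base vec.span_scale)
    qed
  qed
  then show ?thesis unfolding row_rank_def_gen by (metis vec.dim_span)
qed

lemma rank_drop_finite:
  fixes A B :: "complex^'n^'n"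
  assumes R: "rank (\<chi> j k. A$j$k + \<mu>0 * B$j$k) = R"
  shows "finite {\<mu>. rank (\<chi> j k. A$j$k + \<mu> * B$j$k) < R}"
proof -
  define M where "M \<mu> = (\<chi> j k. A$j$k + \<mu> * B$j$k)" for \<mu>
  obtain S where S: "S \<subseteq> rows (M \<mu>0)" "vec.independent S" "rows (M \<mu>0) \<subseteq> vec.span S"
      "card S = vec.dim (rows (M \<mu>0))"
    by (rule vec.basis_exists)
  have cS: "card S = R" using S(4) R unfolding M_def row_rank_def_gen by simp
  have fS: "finite S" using S(2) by (rule vec.finiteI_independent)
  obtain B' where B': "S \<subseteq> B'" "vec.independent B'" "UNIV \<subseteq> vec.span B'"
    using vec.maximal_independent_subset_extend[of S UNIV] S(2) by auto
  have fB': "finite B'" using B'(2) by (rule vec.finiteI_independent)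
  have cB': "card B' = CARD('n)"
  proof -
    have "vec.span B' = UNIV" using B'(3) by blast
    then have "vec.dim B' = CARD('n)" by (metis vec.dim_span vec_dim_card)
    then show ?thesis using vec.dim_eq_card_independent[OF B'(2)] by simp
  qed
  define idx where "idx v = (SOME i. v = row i (M \<mu>0))" for v
  have idx: "v = row (idx v) (M \<mu>0)" if "v \<in> S" for v
  proof -
    have "\<exists>i. v = row i (M \<mu>0)" using that S(1) by (auto simp: rows_def)
    then show ?thesis unfolding idx_def by (rule someI_ex)
  qed
  define I where "I = idx ` S"
  have inj_idx: "inj_on idx S" by (metis idx inj_onI)
  have cI: "card I = R" unfolding I_def using card_image[OF inj_idx] cS by simp
  have "(\<lambda>i. row i (M \<mu>0)) ` I = (\<lambda>v. v) ` S" unfolding I_def image_image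
    by (rule image_cong) (use idx in auto)
  then have rowsI: "(\<lambda>i. row i (M \<mu>0)) ` I = S" by simp
  have fI: "finite I" unfolding I_def using fS by simp
  have "card (UNIV - I) = CARD('n) - R" using card_Diff_subset[OF fI] cI by simp
  moreover have "card (B' - S) = CARD('n) - R" using card_Diff_subset[OF fS B'(1)] cB' cS by simp
  ultimately have "card (UNIV - I) = card (B' - S)" by simp
  then obtain \<phi> where \<phi>: "bij_betw \<phi> (UNIV - I) (B' - S)"
    using finite_same_card_bij[of "UNIV - I" "B' - S"] fB' by auto
  define C :: "complex^'n^'n" where "C = (\<chi> k. if k \<in> I then row k A else \<phi> k)"
  define D :: "complex^'n^'n" where "D = (\<chi> k. if k \<in> I then row k B else 0)"
  define N where "N \<mu> = (\<chi> i j. C$i$j + \<mu> * D$i$j)" for \<mu>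
  have rowN: "row k (N \<mu>) = (if k \<in> I then row k (M \<mu>) else \<phi> k)" for k \<mu>
    by (auto simp: N_def M_def C_def D_def row_def vec_eq_iff)
  obtain p where p: "\<And>\<mu>. poly p \<mu> = det (N \<mu>)"
    using det_affine_poly[of C D] unfolding N_def by blast
  have "B' \<subseteq> rows (N \<mu>0)"
  proof
    fix v assume v: "v \<in> B'"
    show "v \<in> rows (N \<mu>0)"
    proof (cases "v \<in> S")
      case True
      then obtain i where "i \<in> I" "v = row i (M \<mu>0)" using rowsI by blast
      then have "v = row i (N \<mu>0)" using rowN[of i \<mu>0] by simp
      then show ?thesis by (auto simp: rows_def)
    next
      case False
      then obtain k where "k \<in> UNIV - I" "v = \<phi> k" using \<phi> v unfolding bij_betw_def by blast
      then have "v = row k (N \<mu>0)" using rowN[of k \<mu>0] by simp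
      then show ?thesis by (auto simp: rows_def)
    qed
  qed
  then have "vec.span (rows (N \<mu>0)) = UNIV"
    using B'(3) vec.span_mono by (metis top.extremum_uniqueI)
  then have "det (N \<mu>0) \<noteq> 0"
    using matrix_left_invertible_span_rows_gen invertible_left_inverse invertible_det_nz by blast
  then have "p \<noteq> 0" using p by (metis poly_0)
  then have fin: "finite {\<mu>. poly p \<mu> = 0}" by (rule poly_roots_finite)
  have "{\<mu>. rank (M \<mu>) < R} \<subseteq> {\<mu>. poly p \<mu> = 0}"
  proof (safe, rule ccontr)
    fix \<mu> assume lt: "rank (M \<mu>) < R" and nz: "poly p \<mu> \<noteq> 0"
    then have d: "det (N \<mu>) \<noteq> 0" using p by simp
    then have ind: "vec.independent (rows (N \<mu>))" using det_dependent_rows by auto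
    have injr: "inj_on (\<lambda>i. row i (N \<mu>)) UNIV"
      using det_identical_rows d by (metis inj_onI)
    let ?T = "(\<lambda>i. row i (N \<mu>)) ` I"
    have "?T \<subseteq> rows (N \<mu>)" by (auto simp: rows_def)
    then have indT: "vec.independent ?T" using ind vec.independent_mono by auto
    have cT: "card ?T = R" using card_image[OF inj_on_subset[OF injr]] cI by simp
    have "?T \<subseteq> rows (M \<mu>)" using rowN by (auto simp: rows_def)
    then have "card ?T \<le> rank (M \<mu>)"
      using rank_ge_indep[OF indT] by simp
    then show False using lt cT by simp
  qed
  then show ?thesis using fin finite_subset unfolding M_def by blast
qed


lemma pencil_alt: "pencil br x a \<mu> = (\<chi> j k. form_matrix br x $j$k + \<mu> * form_matrix br a $j$k)"
  by (simp add: pencil_def)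

lemma maxrank_attained: fixes x :: "complex^'n" shows "\<exists>\<mu>0. rank (pencil br x a \<mu>0) = Max (range (\<lambda>\<mu>. rank (pencil br x a \<mu>)))"
proof -
  have "range (\<lambda>\<mu>. rank (pencil br x a \<mu>)) \<subseteq> {..CARD('n)}" by (simp add: image_subset_iff rank_le_card)
  then have "finite (range (\<lambda>\<mu>. rank (pencil br x a \<mu>)))" using finite_subset by blast
  then have "Max (range (\<lambda>\<mu>. rank (pencil br x a \<mu>))) \<in> range (\<lambda>\<mu>. rank (pencil br x a \<mu>))"
    by (intro Max_in) auto
  then obtain \<mu>0 where "Max (range (\<lambda>\<mu>. rank (pencil br x a \<mu>))) = rank (pencil br x a \<mu>0)" by blast
  then show ?thesis by (intro exI[of _ \<mu>0]) (rule sym)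
qed

lemma eig_finite: "finite {l. pencil_eigenvalue br x a l}"
proof -
  obtain \<mu>0 where m: "rank (pencil br x a \<mu>0) = Max (range (\<lambda>\<mu>. rank (pencil br x a \<mu>)))"
    using maxrank_attained by blast
  have "finite {\<mu>. rank (pencil br x a \<mu>) < Max (range (\<lambda>\<mu>. rank (pencil br x a \<mu>)))}"
    using rank_drop_finite[of "form_matrix br x" \<mu>0 "form_matrix br a"] m unfolding pencil_alt by simp
  then have "finite (uminus ` {\<mu>. rank (pencil br x a \<mu>) < Max (range (\<lambda>\<mu>. rank (pencil br x a \<mu>)))})"
    by simp
  moreover have "{l. pencil_eigenvalue br x a l} \<subseteq> uminus ` {\<mu>. rank (pencil br x a \<mu>) < Max (range (\<lambda>\<mu>. rank (pencil br x a \<mu>)))}"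
  proof
    fix l assume "l \<in> {l. pencil_eigenvalue br x a l}"
    then have "- l \<in> {\<mu>. rank (pencil br x a \<mu>) < Max (range (\<lambda>\<mu>. rank (pencil br x a \<mu>)))}"
      unfolding pencil_eigenvalue_def by simp
    then show "l \<in> uminus ` {\<mu>. rank (pencil br x a \<mu>) < Max (range (\<lambda>\<mu>. rank (pencil br x a \<mu>)))}"
      by (rule rev_image_eqI) simp
  qed
  ultimately show ?thesis using finite_subset by blast
qed

lemma form_matrix_lin: "form_matrix br (x + t *s a) = (\<chi> j k. form_matrix br x $j$k + t * form_matrix br a $j$k)"
  by (simp add: form_matrix_def pairing_def vec_eq_iff algebra_simps sum.distrib sum_distrib_left)

lemma form_matrix_scale: "form_matrix br (s *s x) = (\<chi> j k. s * form_matrix br x $j$k)"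
  by (simp add: form_matrix_def pairing_def vec_eq_iff algebra_simps sum_distrib_left)

lemma pencil_shift: "pencil br (x + t *s a) a \<mu> = pencil br x a (\<mu> + t)"
  by (simp add: pencil_def form_matrix_lin vec_eq_iff algebra_simps)

lemma pencil_scale: "pencil br (s *s x) a (s * \<mu>) = (\<chi> j k. s * pencil br x a \<mu> $j$k)"
  by (simp add: pencil_def form_matrix_scale vec_eq_iff algebra_simps)

lemma eig_shift: "pencil_eigenvalue br (x + t *s a) a l \<longleftrightarrow> pencil_eigenvalue br x a (l - t)"
proof -
  have r: "range (\<lambda>\<mu>. rank (pencil br (x + t *s a) a \<mu>)) = range (\<lambda>\<mu>. rank (pencil br x a \<mu>))"
  proof (intro set_eqI iffI)
    fix n assume "n \<in> range (\<lambda>\<mu>. rank (pencil br (x + t *s a) a \<mu>))"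
    then obtain \<mu> where "n = rank (pencil br (x + t *s a) a \<mu>)" by auto
    then show "n \<in> range (\<lambda>\<mu>. rank (pencil br x a \<mu>))" by (simp add: pencil_shift)
  next
    fix n assume "n \<in> range (\<lambda>\<mu>. rank (pencil br x a \<mu>))"
    then obtain \<mu> where "n = rank (pencil br x a \<mu>)" by auto
    then have "n = rank (pencil br (x + t *s a) a (\<mu> - t))" by (simp add: pencil_shift)
    then show "n \<in> range (\<lambda>\<mu>. rank (pencil br (x + t *s a) a \<mu>))" by auto
  qed
  show ?thesis unfolding pencil_eigenvalue_def r by (simp add: pencil_shift)
qed

lemma eig_scale:
  assumes "s \<noteq> 0"
  shows "pencil_eigenvalue br (s *s x) a l \<longleftrightarrow> pencil_eigenvalue br x a (l / s)"
proof -
  have e: "rank (pencil br (s *s x) a \<mu>) = rank (pencil br x a (\<mu> / s))" for \<mu>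
  proof -
    have "pencil br (s *s x) a \<mu> = pencil br (s *s x) a (s * (\<mu> / s))" using assms by simp
    moreover have "rank (pencil br (s *s x) a (s * (\<mu> / s))) = rank (pencil br x a (\<mu> / s))"
      unfolding pencil_scale by (rule rank_scale[OF assms])
    ultimately show ?thesis by simp
  qed
  have r: "range (\<lambda>\<mu>. rank (pencil br (s *s x) a \<mu>)) = range (\<lambda>\<mu>. rank (pencil br x a \<mu>))"
  proof (intro set_eqI iffI)
    fix n assume "n \<in> range (\<lambda>\<mu>. rank (pencil br (s *s x) a \<mu>))"
    then obtain \<mu> where "n = rank (pencil br (s *s x) a \<mu>)" by auto
    then show "n \<in> range (\<lambda>\<mu>. rank (pencil br x a \<mu>))" by (simp add: e)
  next
    fix n assume "n \<in> range (\<lambda>\<mu>. rank (pencil br x a \<mu>))"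
    then obtain \<mu> where "n = rank (pencil br x a \<mu>)" by auto
    then have "n = rank (pencil br (s *s x) a (\<mu> * s))" using assms by (simp add: e)
    then show "n \<in> range (\<lambda>\<mu>. rank (pencil br (s *s x) a \<mu>))" by auto
  qed
  show ?thesis unfolding pencil_eigenvalue_def r by (simp add: e)
qed



lemma norm_smult_vec: "norm (t *s (w::complex^'n)) = norm t * norm w"
  by (simp add: norm_vec_def norm_mult L2_set_right_distrib)

lemma sum_one_delta:
  fixes \<alpha> :: "'n::finite \<Rightarrow> nat"
  assumes "sum \<alpha> UNIV = 1"
  shows "\<exists>j. \<alpha> = (\<lambda>i. if i = j then 1 else 0)"
proof -
  obtain j where j: "\<alpha> j \<noteq> 0" using assms by (metis sum.neutral zero_neq_one)
  have le: "\<alpha> i \<le> 1" for i using member_le_sum[of i UNIV \<alpha>] assms by simp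
  have "\<alpha> i = 0" if "i \<noteq> j" for i
  proof -
    have "sum \<alpha> {i, j} \<le> sum \<alpha> UNIV" by (rule sum_mono2) auto
    then show ?thesis using that j assms by simp
  qed
  then show ?thesis using j le by (intro exI[of _ j]) (auto simp: fun_eq_iff le_antisym)
qed

lemma finite_deg:
  "finite {q :: ('n::finite \<Rightarrow> nat) \<times> ('n \<Rightarrow> nat). sum (fst q) UNIV + sum (snd q) UNIV = k}"
proof -
  have "{q :: ('n \<Rightarrow> nat) \<times> ('n \<Rightarrow> nat). sum (fst q) UNIV + sum (snd q) UNIV = k}
        \<subseteq> (Pi\<^sub>E UNIV (\<lambda>_. {..k})) \<times> (Pi\<^sub>E UNIV (\<lambda>_. {..k}))"
  proof (rule subsetI)
    fix q :: "('n \<Rightarrow> nat) \<times> ('n \<Rightarrow> nat)"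
    assume q: "q \<in> {q. sum (fst q) UNIV + sum (snd q) UNIV = k}"
    obtain \<alpha> \<beta> where qe: "q = (\<alpha>, \<beta>)" by (cases q)
    have k: "k = sum \<alpha> UNIV + sum \<beta> UNIV" using q qe by simp
    have "\<alpha> i \<le> k" for i using member_le_sum[of i UNIV \<alpha>] k by simp
    moreover have "\<beta> i \<le> k" for i using member_le_sum[of i UNIV \<beta>] k by simp
    ultimately show "q \<in> (Pi\<^sub>E UNIV (\<lambda>_. {..k})) \<times> (Pi\<^sub>E UNIV (\<lambda>_. {..k}))"
      by (simp add: qe PiE_UNIV_domain)
  qed
  moreover have "finite ((Pi\<^sub>E UNIV (\<lambda>_::'n. {..k})) \<times> (Pi\<^sub>E UNIV (\<lambda>_::'n. {..k})))"
    by (intro finite_cartesian_product finite_PiE) auto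
  ultimately show ?thesis using finite_subset by blast
qed


lemma m_linear:
  fixes c :: "('n::finite \<Rightarrow> nat) \<times> ('n \<Rightarrow> nat) \<Rightarrow> complex"
  assumes "sum \<alpha> UNIV + sum \<beta> UNIV = 1"
  shows "c (\<alpha>,\<beta>) * (\<Prod>i\<in>UNIV. (w$i) ^ \<alpha> i) * (\<Prod>i\<in>UNIV. (0::complex) ^ \<beta> i)
       = (\<Sum>l\<in>UNIV. w$l * (c (\<alpha>,\<beta>) * (\<Prod>i\<in>UNIV. ((axis l 1::complex^'n)$i) ^ \<alpha> i) * (\<Prod>i\<in>UNIV. (0::complex) ^ \<beta> i)))"
proof (cases "sum \<beta> UNIV = 0")
  case True
  then have b0: "\<beta> i = 0" for i by simp
  have "sum \<alpha> UNIV = 1" using assms True by simp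
  then obtain j where aj: "\<alpha> = (\<lambda>i. if i = j then 1 else 0)" using sum_one_delta by blast
  have p: "(\<Prod>i\<in>UNIV. (v$i) ^ \<alpha> i) = v$j" for v :: "complex^'n"
  proof -
    have "(\<Prod>i\<in>UNIV. (v$i) ^ \<alpha> i) = (\<Prod>i\<in>UNIV. if i = j then v$i else 1)"
      by (rule prod.cong) (auto simp: aj)
    also have "\<dots> = v$j" by (simp add: prod.delta)
    finally show ?thesis .
  qed
  have "(\<Sum>l\<in>UNIV. w$l * (c (\<alpha>,\<beta>) * ((axis l 1::complex^'n)$j))) = w$j * c (\<alpha>,\<beta>)"
    by (simp add: axis_def if_distrib sum.delta cong: if_cong)
  then show ?thesis by (simp add: p b0 mult.commute)
next
  case False
  then obtain j where "\<beta> j \<noteq> 0" by (metis sum.neutral)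
  then have z: "(\<Prod>i\<in>UNIV. (0::complex) ^ \<beta> i) = 0"
    by (intro prod_zero) (auto intro!: bexI[of _ j])
  show ?thesis unfolding z by simp
qed

lemma line_series:
  fixes f :: "(complex^'n) \<times> (complex^'n) \<Rightarrow> complex"
  assumes "locally_analytic_on f U" "(x,a) \<in> U"
  shows "\<exists>L::complex^'n. \<forall>w. \<exists>\<rho>>0. \<exists>b. (\<forall>t. norm t < \<rho> \<longrightarrow> (\<lambda>k. b k * t^k) sums f (x + t *s w, a))
            \<and> b 1 = (\<Sum>i\<in>UNIV. w$i * L$i)"
proof -
  obtain r c where r: "r > 0" and c: "\<forall>q\<in>ball (x,a) r. ((\<lambda>(\<alpha>, \<beta>). c (\<alpha>, \<beta>) * (\<Prod>i\<in>UNIV. (fst q $ i - x $ i) ^ \<alpha> i)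
                                  * (\<Prod>i\<in>UNIV. (snd q $ i - a $ i) ^ \<beta> i)) has_sum f q) UNIV"
    using assms unfolding locally_analytic_on_def by fastforce
  define deg where "deg q = sum (fst q) UNIV + sum (snd q) UNIV" for q :: "('n \<Rightarrow> nat) \<times> ('n \<Rightarrow> nat)"
  define m where "m w q = c q * (\<Prod>i\<in>UNIV. (w$i) ^ fst q i) * (\<Prod>i\<in>UNIV. (0::complex) ^ snd q i)"
    for w :: "complex^'n" and q
  define b where "b w k = (\<Sum>q\<in>{q. deg q = k}. m w q)" for w k
  define L where "L = (\<chi> i. b (axis i 1) 1)"
  have fin: "finite {q. deg q = k}" for k using finite_deg[of k] unfolding deg_def by simp
  show ?thesis
  proof (rule exI[of _ L], rule allI)
    fix w :: "complex^'n"
    define \<rho> where "\<rho> = r / (norm w + 1)"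
    have nw: "norm w + 1 > 0" by (metis add_pos_nonneg norm_ge_zero zero_less_one add.commute)
    have \<rho>: "\<rho> > 0" using r nw by (simp add: \<rho>_def)
    have sums: "(\<lambda>k. b w k * t^k) sums f (x + t *s w, a)" if t: "norm t < \<rho>" for t
    proof -
      have "norm t * norm w \<le> norm t * (norm w + 1)" by (simp add: mult_left_mono)
      also have "\<dots> < \<rho> * (norm w + 1)" using t nw by (intro mult_strict_right_mono) auto
      also have "\<dots> = r" using nw by (simp add: \<rho>_def)
      finally have lt: "norm t * norm w < r" .
      have "dist (x,a) (x + t *s w, a) = norm (t *s w)"
        by (simp add: dist_Pair_Pair dist_norm)
      then have q: "(x + t *s w, a) \<in> ball (x,a) r" using lt by (simp add: norm_smult_vec)
      have trm: "(\<lambda>(\<alpha>, \<beta>). c (\<alpha>, \<beta>) * (\<Prod>i\<in>UNIV. (fst (x + t *s w, a) $ i - x $ i) ^ \<alpha> i)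
                                  * (\<Prod>i\<in>UNIV. (snd (x + t *s w, a) $ i - a $ i) ^ \<beta> i))
            = (\<lambda>q. t ^ deg q * m w q)"
      proof (rule ext, clarify)
        fix \<alpha> \<beta> :: "'n \<Rightarrow> nat"
        have p1: "(\<Prod>i\<in>UNIV. (t * w$i) ^ \<alpha> i) = t ^ sum \<alpha> UNIV * (\<Prod>i\<in>UNIV. (w$i) ^ \<alpha> i)"
          by (simp add: power_mult_distrib prod.distrib power_sum)
        have p2: "(\<Prod>i\<in>UNIV. (0::complex) ^ \<beta> i) = t ^ sum \<beta> UNIV * (\<Prod>i\<in>UNIV. (0::complex) ^ \<beta> i)"
        proof (cases "\<forall>i. \<beta> i = 0")
          case True then show ?thesis by simp
        next
          case False
          then obtain j where "\<beta> j \<noteq> 0" by blast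
          then have "(\<Prod>i\<in>UNIV. (0::complex) ^ \<beta> i) = 0"
            by (intro prod_zero) (auto intro!: bexI[of _ j])
          then show ?thesis by simp
        qed
        show "c (\<alpha>, \<beta>) * (\<Prod>i\<in>UNIV. (fst (x + t *s w, a) $ i - x $ i) ^ \<alpha> i)
                                  * (\<Prod>i\<in>UNIV. (snd (x + t *s w, a) $ i - a $ i) ^ \<beta> i)
             = t ^ deg (\<alpha>, \<beta>) * m w (\<alpha>, \<beta>)"
        proof -
          have e1: "(\<Prod>i\<in>UNIV. (fst (x + t *s w, a) $ i - x $ i) ^ \<alpha> i) = (\<Prod>i\<in>UNIV. (t * w$i) ^ \<alpha> i)"
            by simp
          have e2: "(\<Prod>i\<in>UNIV. (snd (x + t *s w, a) $ i - a $ i) ^ \<beta> i) = (\<Prod>i\<in>UNIV. (0::complex) ^ \<beta> i)"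
            by simp
          have "c (\<alpha>, \<beta>) * (\<Prod>i\<in>UNIV. (t * w$i) ^ \<alpha> i) * (\<Prod>i\<in>UNIV. (0::complex) ^ \<beta> i)
              = c (\<alpha>, \<beta>) * (t ^ sum \<alpha> UNIV * (\<Prod>i\<in>UNIV. (w$i) ^ \<alpha> i)) * (t ^ sum \<beta> UNIV * (\<Prod>i\<in>UNIV. (0::complex) ^ \<beta> i))"
            by (subst p2) (simp only: p1)
          also have "\<dots> = t ^ deg (\<alpha>, \<beta>) * m w (\<alpha>, \<beta>)"
            unfolding deg_def m_def fst_conv snd_conv by (simp only: power_add mult_ac)
          finally show ?thesis unfolding e1 e2 .
        qed
      qed
      have "((\<lambda>q. t ^ deg q * m w q) has_sum f (x + t *s w, a)) UNIV"
        using bspec[OF c q] unfolding trm .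
      moreover have bij: "bij_betw (\<lambda>q. (deg q, q)) UNIV (Sigma UNIV (\<lambda>k. {q. deg q = k}))"
        unfolding bij_betw_def
      proof
        show "inj_on (\<lambda>q. (deg q, q)) UNIV" by (simp add: inj_on_def)
        show "range (\<lambda>q. (deg q, q)) = Sigma UNIV (\<lambda>k. {q. deg q = k})"
        proof (intro set_eqI iffI)
          fix z assume "z \<in> Sigma UNIV (\<lambda>k. {q. deg q = k})"
          then show "z \<in> range (\<lambda>q. (deg q, q))" by (cases z) auto
        qed auto
      qed
      ultimately have hs2: "((\<lambda>(k,q). t ^ deg q * m w q) has_sum f (x + t *s w, a)) (Sigma UNIV (\<lambda>k. {q. deg q = k}))"
        using has_sum_reindex_bij_betw[OF bij, of "\<lambda>(k,q). t ^ deg q * m w q"] by simp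
      have inner: "((\<lambda>q. (\<lambda>(k,q). t ^ deg q * m w q) (k,q)) has_sum (t ^ k * b w k)) {q. deg q = k}" for k
      proof -
        have "(\<Sum>q\<in>{q. deg q = k}. t ^ deg q * m w q) = t ^ k * b w k"
          unfolding b_def sum_distrib_left by (rule sum.cong) auto
        then show ?thesis using has_sum_finite[OF fin[of k], of "\<lambda>q. t ^ deg q * m w q"] by simp
      qed
      have "((\<lambda>k. t ^ k * b w k) has_sum f (x + t *s w, a)) UNIV"
        by (rule has_sum_Sigma'[OF hs2 inner])
      then have "(\<lambda>k. t ^ k * b w k) sums f (x + t *s w, a)" by (rule has_sum_imp_sums)
      then show ?thesis by (simp add: mult.commute)
    qed
    have b1: "b w 1 = (\<Sum>i\<in>UNIV. w$i * L$i)"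
    proof -
      have "b w 1 = (\<Sum>q\<in>{q. deg q = 1}. \<Sum>l\<in>UNIV. w$l * m (axis l 1) q)"
        unfolding b_def
      proof (rule sum.cong, simp)
        fix q assume "q \<in> {q. deg q = 1}"
        then show "m w q = (\<Sum>l\<in>UNIV. w$l * m (axis l 1) q)"
          unfolding m_def deg_def using m_linear[of "fst q" "snd q" c w] by (cases q) simp
      qed
      also have "\<dots> = (\<Sum>l\<in>UNIV. w$l * b (axis l 1) 1)"
        unfolding b_def sum_distrib_left by (rule sum.swap)
      finally show ?thesis by (simp add: L_def)
    qed
    show "\<exists>\<rho>>0. \<exists>b. (\<forall>t. norm t < \<rho> \<longrightarrow> (\<lambda>k. b k * t^k) sums f (x + t *s w, a))
            \<and> b 1 = (\<Sum>i\<in>UNIV. w$i * L$i)"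
      using \<rho> sums b1 by blast
  qed
qed

lemma line_deriv:
  fixes f :: "(complex^'n) \<times> (complex^'n) \<Rightarrow> complex"
  assumes "locally_analytic_on f U" "(x,a) \<in> U"
  shows "\<exists>L::complex^'n. \<forall>w. \<exists>\<rho>>0. ((\<lambda>t. f (x + t *s w, a)) has_field_derivative (\<Sum>i\<in>UNIV. w$i * L$i)) (at 0)
            \<and> continuous_on (ball 0 \<rho>) (\<lambda>t. f (x + t *s w, a))"
proof -
  obtain L :: "complex^'n" where L: "\<forall>w. \<exists>\<rho>>0. \<exists>b. (\<forall>t. norm t < \<rho> \<longrightarrow> (\<lambda>k. b k * t^k) sums f (x + t *s w, a))
            \<and> b 1 = (\<Sum>i\<in>UNIV. w$i * L$i)"
    using line_series[OF assms] by blast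
  show ?thesis
  proof (rule exI[of _ L], rule allI)
    fix w
    obtain \<rho> b where \<rho>: "\<rho> > 0" and sb0: "\<forall>t. norm t < \<rho> \<longrightarrow> (\<lambda>k. b k * t^k) sums f (x + t *s w, a)"
      and b1: "b 1 = (\<Sum>i\<in>UNIV. w$i * L$i)"
      using spec[OF L, of w] by blast
    have sb: "(\<lambda>k. b k * t^k) sums f (x + t *s w, a)" if "norm t < \<rho>" for t
      using sb0 that by simp
    have summ: "summable (\<lambda>n. b n * z ^ n)" if "norm z < \<rho>" for z
      using sums_summable[OF sb[OF that]] .
    have eq: "(\<Sum>n. b n * t ^ n) = f (x + t *s w, a)" if "t \<in> ball 0 \<rho>" for t
      using sb[of t] that by (simp add: sums_iff)
    have D: "((\<lambda>z. \<Sum>n. b n * z^n) has_field_derivative (\<Sum>n. diffs b n * z^n)) (at z)" if "norm z < \<rho>" for z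
      by (rule termdiffs_strong'[OF summ that])
    have "((\<lambda>z. \<Sum>n. b n * z^n) has_field_derivative b 1) (at 0)"
      using D[of 0] \<rho> by (simp add: diffs_def)
    then have d0: "((\<lambda>t. f (x + t *s w, a)) has_field_derivative b 1) (at 0)"
      by (rule has_field_derivative_transform_within_open[of _ _ _ "ball 0 \<rho>"]) (use \<rho> eq in auto)
    have "continuous_on (ball 0 \<rho>) (\<lambda>z. \<Sum>n. b n * z^n)"
      by (intro continuous_at_imp_continuous_on ballI DERIV_isCont[OF D]) auto
    moreover have "continuous_on (ball 0 \<rho>) (\<lambda>z. \<Sum>n. b n * z^n) = continuous_on (ball 0 \<rho>) (\<lambda>t. f (x + t *s w, a))"
      by (rule continuous_on_cong[OF refl eq])
    ultimately have "continuous_on (ball 0 \<rho>) (\<lambda>t. f (x + t *s w, a))" by simp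
    then show "\<exists>\<rho>>0. ((\<lambda>t. f (x + t *s w, a)) has_field_derivative (\<Sum>i\<in>UNIV. w$i * L$i)) (at 0)
            \<and> continuous_on (ball 0 \<rho>) (\<lambda>t. f (x + t *s w, a))"
      using d0 b1 \<rho> by auto
  qed
qed

lemma dx_eq:
  fixes f :: "(complex^'n) \<times> (complex^'n) \<Rightarrow> complex"
  assumes "\<forall>w. \<exists>\<rho>>0. ((\<lambda>t. f (x + t *s w, a)) has_field_derivative (\<Sum>i\<in>UNIV. w$i * L$i)) (at 0)
            \<and> continuous_on (ball 0 \<rho>) (\<lambda>t. f (x + t *s w, a))"
  shows "dx f x a = L"
proof -
  have "dx f x a $ i = L $ i" for i
  proof -
    obtain \<rho> where "((\<lambda>t. f (x + t *s axis i 1, a)) has_field_derivative (\<Sum>j\<in>UNIV. (axis i 1::complex^'n)$j * L$j)) (at 0)"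
      using spec[OF assms, of "axis i 1"] by blast
    then have "deriv (\<lambda>t. f (x + t *s axis i 1, a)) 0 = (\<Sum>j\<in>UNIV. (axis i 1::complex^'n)$j * L$j)"
      by (rule DERIV_imp_deriv)
    also have "\<dots> = (\<Sum>j\<in>UNIV. if j = i then L$j else 0)" by (rule sum.cong) (auto simp: axis_def)
    also have "\<dots> = L$i" by simp
    finally show ?thesis by (simp add: dx_def)
  qed
  then show ?thesis by (simp add: vec_eq_iff)
qed
lemma key:
  fixes f :: "(complex^'n) \<times> (complex^'n) \<Rightarrow> complex"
  assumes la: "locally_analytic_on f U" and U: "open U" and p: "(x,a) \<in> U"
    and eig: "\<forall>(x,a)\<in>U. pencil_eigenvalue br x a (f (x,a))"
  shows "(\<Sum>i\<in>UNIV. a$i * dx f x a $ i) = 1 \<and> (\<Sum>i\<in>UNIV. x$i * dx f x a $ i) = f (x,a)"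
proof -
  obtain L :: "complex^'n" where L: "\<forall>w. \<exists>\<rho>>0. ((\<lambda>t. f (x + t *s w, a)) has_field_derivative (\<Sum>i\<in>UNIV. w$i * L$i)) (at 0)
            \<and> continuous_on (ball 0 \<rho>) (\<lambda>t. f (x + t *s w, a))"
    using line_deriv[OF la p] by blast
  have dxL: "dx f x a = L" by (rule dx_eq[OF L])
  obtain \<epsilon> where \<epsilon>: "\<epsilon> > 0" "ball (x,a) \<epsilon> \<subseteq> U" using U p open_contains_ball by blast
  have inU: "(x + t *s w, a) \<in> U" if "norm t < \<epsilon> / (norm w + 1)" for t w
  proof -
    have nw: "norm w + 1 > 0" by (metis add_pos_nonneg norm_ge_zero zero_less_one add.commute)
    have "norm t * norm w \<le> norm t * (norm w + 1)" by (simp add: mult_left_mono)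
    also have "\<dots> < \<epsilon> / (norm w + 1) * (norm w + 1)" using that nw by (intro mult_strict_right_mono) auto
    also have "\<dots> = \<epsilon>" using nw by simp
    finally have lt: "norm t * norm w < \<epsilon>" .
    have "dist (x,a) (x + t *s w, a) = norm (t *s w)"
      by (simp add: dist_Pair_Pair dist_norm)
    then have "(x + t *s w, a) \<in> ball (x,a) \<epsilon>" using lt by (simp add: norm_smult_vec)
    then show ?thesis using \<epsilon> by blast
  qed
  have fin: "finite {l. pencil_eigenvalue br x a l}" by (rule eig_finite)
  have pos1: "norm w + 1 > 0" for w :: "complex^'n" by (metis add_pos_nonneg norm_ge_zero zero_less_one add.commute)
  have part1: "(\<Sum>i\<in>UNIV. a$i * L$i) = 1"
  proof -
    obtain \<rho> where \<rho>: "\<rho> > 0" and d: "((\<lambda>t. f (x + t *s a, a)) has_field_derivative (\<Sum>i\<in>UNIV. a$i * L$i)) (at 0)"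
      and c: "continuous_on (ball 0 \<rho>) (\<lambda>t. f (x + t *s a, a))"
      using spec[OF L, of a] by blast
    define \<delta> where "\<delta> = min \<rho> (\<epsilon> / (norm a + 1))"
    have \<delta>: "\<delta> > 0" using \<rho> \<epsilon> pos1 by (simp add: \<delta>_def)
    define g where "g t = f (x + t *s a, a) - t" for t
    have "continuous_on (ball 0 \<delta>) g" unfolding g_def
      by (intro continuous_intros continuous_on_subset[OF c]) (auto simp: \<delta>_def)
    moreover have "g ` ball 0 \<delta> \<subseteq> {l. pencil_eigenvalue br x a l}"
    proof
      fix l assume "l \<in> g ` ball 0 \<delta>"
      then obtain t where t: "t \<in> ball 0 \<delta>" "l = g t" by blast
      then have "(x + t *s a, a) \<in> U" using inU[of t a] by (auto simp: \<delta>_def)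
      then have "pencil_eigenvalue br (x + t *s a) a (f (x + t *s a, a))" using eig by auto
      then show "l \<in> {l. pencil_eigenvalue br x a l}" using t by (simp add: eig_shift g_def)
    qed
    then have "finite (g ` ball 0 \<delta>)" using fin finite_subset by blast
    ultimately have "g constant_on ball 0 \<delta>"
      by (intro continuous_finite_range_constant) auto
    then have "g t = g 0" if "t \<in> ball 0 \<delta>" for t
      using that \<delta> unfolding constant_on_def by (metis centre_in_ball)
    then have eqf: "f (x,a) + t = f (x + t *s a, a)" if "t \<in> ball 0 \<delta>" for t
    proof -
      have "g t = g 0" using that \<open>\<And>t. t \<in> ball 0 \<delta> \<Longrightarrow> g t = g 0\<close> by blast
      then show ?thesis unfolding g_def by (simp add: diff_eq_eq add.commute)
    qed
    have "((\<lambda>t. f (x,a) + t) has_field_derivative 1) (at 0)"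
      by (auto intro!: derivative_eq_intros)
    then have "((\<lambda>t. f (x + t *s a, a)) has_field_derivative 1) (at 0)"
      by (rule has_field_derivative_transform_within_open[of _ _ _ "ball 0 \<delta>"]) (use \<delta> eqf in auto)
    then show ?thesis using d DERIV_unique by blast
  qed
  have part2: "(\<Sum>i\<in>UNIV. x$i * L$i) = f (x,a)"
  proof -
    obtain \<rho> where \<rho>: "\<rho> > 0" and d: "((\<lambda>t. f (x + t *s x, a)) has_field_derivative (\<Sum>i\<in>UNIV. x$i * L$i)) (at 0)"
      and c: "continuous_on (ball 0 \<rho>) (\<lambda>t. f (x + t *s x, a))"
      using spec[OF L, of x] by blast
    define \<delta> where "\<delta> = min (min \<rho> 1) (\<epsilon> / (norm x + 1))"
    have \<delta>: "\<delta> > 0" using \<rho> \<epsilon> pos1 by (simp add: \<delta>_def)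
    have nz: "1 + t \<noteq> 0" if "t \<in> ball 0 \<delta>" for t :: complex
    proof
      assume "1 + t = 0"
      then have "t = -1" by (simp add: add_eq_0_iff)
      then show False using that by (simp add: \<delta>_def)
    qed
    define g where "g t = f (x + t *s x, a) / (1 + t)" for t
    have "continuous_on (ball 0 \<delta>) g" unfolding g_def
      by (intro continuous_intros continuous_on_subset[OF c]) (auto simp: \<delta>_def nz)
    moreover have "g ` ball 0 \<delta> \<subseteq> {l. pencil_eigenvalue br x a l}"
    proof
      fix l assume "l \<in> g ` ball 0 \<delta>"
      then obtain t where t: "t \<in> ball 0 \<delta>" "l = g t" by blast
      then have "(x + t *s x, a) \<in> U" using inU[of t x] by (auto simp: \<delta>_def)
      then have e: "pencil_eigenvalue br (x + t *s x) a (f (x + t *s x, a))" using eig by auto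
      have xe: "x + t *s x = (1 + t) *s x" by (simp add: vec_eq_iff algebra_simps)
      have "pencil_eigenvalue br ((1 + t) *s x) a (f (x + t *s x, a))" using e xe by metis
      then have "pencil_eigenvalue br x a (f (x + t *s x, a) / (1 + t))"
        by (simp only: eig_scale[OF nz[OF t(1)]])
      then show "l \<in> {l. pencil_eigenvalue br x a l}" using t(2) unfolding g_def by simp
    qed
    then have "finite (g ` ball 0 \<delta>)" using fin finite_subset by blast
    ultimately have "g constant_on ball 0 \<delta>"
      by (intro continuous_finite_range_constant) auto
    then have "g t = g 0" if "t \<in> ball 0 \<delta>" for t
      using that \<delta> unfolding constant_on_def by (metis centre_in_ball)
    then have eqf: "(1 + t) * f (x,a) = f (x + t *s x, a)" if "t \<in> ball 0 \<delta>" for t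
    proof -
      have "g t = g 0" using that \<open>\<And>t. t \<in> ball 0 \<delta> \<Longrightarrow> g t = g 0\<close> by blast
      then have h: "f (x + t *s x, a) / (1 + t) = f (x, a)" unfolding g_def by simp
      have "f (x + t *s x, a) = f (x, a) * (1 + t)"
        using h nz[OF that] by (simp add: divide_eq_eq)
      then show ?thesis by (simp only: mult.commute)
    qed
    have "((\<lambda>t. (1 + t) * f (x,a)) has_field_derivative f (x,a)) (at 0)"
      by (auto intro!: derivative_eq_intros)
    then have "((\<lambda>t. f (x + t *s x, a)) has_field_derivative f (x,a)) (at 0)"
      by (rule has_field_derivative_transform_within_open[of _ _ _ "ball 0 \<delta>"]) (use \<delta> eqf in auto)
    then show ?thesis using d DERIV_unique by blast
  qed
  show ?thesis using part1 part2 dxL by simp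
qed

theorem lemma4:
  fixes br :: "complex^'n \<Rightarrow> complex^'n \<Rightarrow> complex^'n"
    and U :: "((complex^'n) \<times> (complex^'n)) set"
    and lam1 lam2 :: "(complex^'n) \<times> (complex^'n) \<Rightarrow> complex"
  assumes "lie_algebra br"
    and "open U"
    and "locally_analytic_on lam1 U"
    and "locally_analytic_on lam2 U"
    and "\<forall>(x, a)\<in>U. pencil_eigenvalue br x a (lam1 (x, a)) \<and> pencil_eigenvalue br x a (lam2 (x, a))
                     \<and> lam1 (x, a) \<noteq> lam2 (x, a)"
  shows "\<exists>V. open V \<and> V \<subseteq> U \<and> U \<subseteq> closure V \<and>
             (\<forall>(x0, a0)\<in>V. wedge2 (dx lam1 x0 a0) (dx lam2 x0 a0) \<noteq> 0)"
proof (intro exI conjI)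
  show "open U" "U \<subseteq> U" "U \<subseteq> closure U" using assms(2) closure_subset by auto
  show "\<forall>(x0, a0)\<in>U. wedge2 (dx lam1 x0 a0) (dx lam2 x0 a0) \<noteq> 0"
  proof (clarify)
    fix x a assume p: "(x,a) \<in> U" and w: "wedge2 (dx lam1 x a) (dx lam2 x a) = 0"
    have e1: "\<forall>(x,a)\<in>U. pencil_eigenvalue br x a (lam1 (x,a))" using assms(5) by auto
    have e2: "\<forall>(x,a)\<in>U. pencil_eigenvalue br x a (lam2 (x,a))" using assms(5) by auto
    define v1 where "v1 = dx lam1 x a"
    define v2 where "v2 = dx lam2 x a"
    have k1: "(\<Sum>i\<in>UNIV. a$i * v1$i) = 1" "(\<Sum>i\<in>UNIV. x$i * v1$i) = lam1 (x,a)"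
      using key[OF assms(3) assms(2) p e1] unfolding v1_def by auto
    have k2: "(\<Sum>i\<in>UNIV. a$i * v2$i) = 1" "(\<Sum>i\<in>UNIV. x$i * v2$i) = lam2 (x,a)"
      using key[OF assms(4) assms(2) p e2] unfolding v2_def by auto
    have sw: "v1$i * v2$j = v1$j * v2$i" for i j
    proof -
      have "wedge2 v1 v2 $ (i,j) = 0" using w by (simp add: v1_def v2_def)
      then show ?thesis by (simp add: wedge2_def)
    qed
    have "lam1 (x,a) = (\<Sum>i\<in>UNIV. x$i * v1$i) * (\<Sum>j\<in>UNIV. a$j * v2$j)" using k1 k2 by simp
    also have "\<dots> = (\<Sum>i\<in>UNIV. \<Sum>j\<in>UNIV. x$i * a$j * (v1$i * v2$j))"
      unfolding sum_product by (simp add: mult_ac)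
    also have "\<dots> = (\<Sum>i\<in>UNIV. \<Sum>j\<in>UNIV. x$i * a$j * (v1$j * v2$i))"
      by (intro sum.cong refl) (subst sw, rule refl)
    also have "\<dots> = (\<Sum>j\<in>UNIV. \<Sum>i\<in>UNIV. x$i * a$j * (v1$j * v2$i))"
      by (rule sum.swap)
    also have "\<dots> = (\<Sum>j\<in>UNIV. a$j * v1$j) * (\<Sum>i\<in>UNIV. x$i * v2$i)"
      unfolding sum_product by (simp add: mult_ac)
    also have "\<dots> = lam2 (x,a)" using k1 k2 by simp
    finally show False using assms(5) p by auto
  qed
qed


end
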